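(* Let $F=\mathbb{F}_{2^8}$, $V=F^{16}$, let $\mathsf M$ be the AES mixing layer and $t$ its order in $\mathrm{GL}(V)$, and let $\alpha:V\to(\mathbb{F}_2)^{4096t}$, $\alpha(v)=(\varepsilon(v),\varepsilon(\mathsf Mv),\dots,\varepsilon(\mathsf M^{t-1}v))$. Let $\mathcal G$ be the subgroup of $\mathrm{Sym}(V)$ generated by $\tilde{\mathcal G}$, $\bar{\mathcal G}$ and $\mathsf M$. Then $\alpha$ is a space embedding with respect to $\mathcal G$: for every $\sigma\in\mathcal G$ there exists $A_\sigma\in\mathrm{GL}((\mathbb{F}_2)^{4096t})$ with $\alpha\circ\sigma=A_\sigma\circ\alpha$.
   Context: $F=\mathbb{F}_2[x]/(x^8+x^4+x^3+x+1)$; write $\bar x$ for the class of $x$. $V=F^{16}$ is viewed as an $\mathbb{F}_2$-space of dimension 128, with elements $(s_0,\dots,s_{15})$. ShiftRows is $(s_0,\dots,s_{15})\mapsto(s_0,s_5,s_{10},s_{15},s_4,s_9,s_{14},s_3,s_8,s_{13},s_2,s_7,s_{12},s_1,s_6,s_{11})$. MixColumns replaces each column $(s_{4c},s_{4c+1},s_{4c+2},s_{4c+3})^T$, $c=0,1,2,3$, by $C(s_{4c},\dots,s_{4c+3})^T$ with $C=\begin{pmatrix}\bar x&\bar x+1&1&1\\1&\bar x&\bar x+1&1\\1&1&\bar x&\bar x+1\\\bar x+1&1&1&\bar x\end{pmatrix}$. The AES mixing layer is $\mathsf M=\text{MixColumns}\circ\text{ShiftRows}$ (ShiftRows applied first).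 Let $\gamma$ be a primitive element of $F$, $e_1,\dots,e_{256}$ the standard basis of $(\mathbb{F}_2)^{256}$, $\varepsilon':F\to(\mathbb{F}_2)^{256}$ given by $\varepsilon'(0)=e_1$, $\varepsilon'(\gamma^i)=e_{i+1}$ ($1\le i\le255$), and $\varepsilon(y_1,\dots,y_{16})=(\varepsilon'(y_1),\dots,\varepsilon'(y_{16}))\in(\mathbb{F}_2)^{4096}$. $\tilde{\mathcal G}$ is the set of maps $(y_1,\dots,y_{16})\mapsto(ay_1+c,\dots,ay_{16}+c)$ with $a\in F\setminus\{0\}$, $c\in F$; $\bar{\mathcal G}$ is the set of translations $v\mapsto v+d$, $d\in V$. *)

theory Defs
  imports "HOL-Library.Z2" "HOL-Computational_Algebra.Polynomial"
    "HOL-Algebra.Bij" "HOL-Algebra.Generated_Groups" "Jordan_Normal_Form.Matrix"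
begin

definition aes_poly :: "bit poly" where
  "aes_poly = [:1, 1, 0, 1, 1, 0, 0, 0, 1:]"

definition GF :: "bit poly set" where
  "GF = {p. degree p < 8}"

definition gf_mul :: "bit poly \<Rightarrow> bit poly \<Rightarrow> bit poly" where
  "gf_mul p q = (p * q) mod aes_poly"

definition gf_pow :: "bit poly \<Rightarrow> nat \<Rightarrow> bit poly" where
  "gf_pow p n = (p ^ n) mod aes_poly"

definition xbar :: "bit poly" where
  "xbar = [:0, 1:]"

definition gf_primitive :: "bit poly \<Rightarrow> bool" where
  "gf_primitive g \<longleftrightarrow> g \<in> GF \<and> g \<noteq> 0 \<and>
     (\<forall>y \<in> GF. y \<noteq> 0 \<longrightarrow> (\<exists>i. y = gf_pow g i))"

definition AES_V :: "(nat \<Rightarrow> bit poly) set" where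
  "AES_V = {s. (\<forall>i<16. s i \<in> GF) \<and> (\<forall>i\<ge>16. s i = 0)}"

definition shift_perm :: "nat list" where
  "shift_perm = [0,5,10,15,4,9,14,3,8,13,2,7,12,1,6,11]"

definition shift_rows :: "(nat \<Rightarrow> bit poly) \<Rightarrow> (nat \<Rightarrow> bit poly)" where
  "shift_rows s = (\<lambda>i. if i < 16 then s (shift_perm ! i) else 0)"

definition mc_coef :: "nat \<Rightarrow> nat \<Rightarrow> bit poly" where
  "mc_coef r k = (let d = (k + 4 - r) mod 4 in
     if d = 0 then xbar else if d = 1 then xbar + 1 else 1)"

definition mix_columns :: "(nat \<Rightarrow> bit poly) \<Rightarrow> (nat \<Rightarrow> bit poly)" where
  "mix_columns s = (\<lambda>i. if i < 16 then
      (\<Sum>k<4. gf_mul (mc_coef (i mod 4) k) (s (4 * (i div 4) + k))) else 0)"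

definition aes_M :: "(nat \<Rightarrow> bit poly) \<Rightarrow> (nat \<Rightarrow> bit poly)" where
  "aes_M = mix_columns \<circ> shift_rows"

definition aes_order :: nat where
  "aes_order = (LEAST n. 0 < n \<and> (\<forall>v \<in> AES_V. (aes_M ^^ n) v = v))"

definition eps' :: "bit poly \<Rightarrow> bit poly \<Rightarrow> nat \<Rightarrow> bit" where
  "eps' g y p = (if (if y = 0 then p = 0 else (1 \<le> p \<and> p \<le> 255 \<and> y = gf_pow g p))
                 then 1 else 0)"

text \<open>alpha(v) = (eps(v), eps(Mv), ..., eps(M^(t-1) v)) in F_2^(4096 t);
  coordinate k*4096 + j*256 + p is coordinate p of eps'(j-th byte of M^k v).\<close>
definition aes_alpha :: "bit poly \<Rightarrow> (nat \<Rightarrow> bit poly) \<Rightarrow> bit vec" where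
  "aes_alpha g v = vec (4096 * aes_order)
     (\<lambda>n. eps' g (((aes_M ^^ (n div 4096)) v) ((n mod 4096) div 256)) (n mod 256))"

definition G_tilde :: "((nat \<Rightarrow> bit poly) \<Rightarrow> (nat \<Rightarrow> bit poly)) set" where
  "G_tilde = {(\<lambda>s i. if i < 16 then gf_mul a (s i) + c else 0) | a c.
                 a \<in> GF \<and> a \<noteq> 0 \<and> c \<in> GF}"

definition G_bar :: "((nat \<Rightarrow> bit poly) \<Rightarrow> (nat \<Rightarrow> bit poly)) set" where
  "G_bar = {(\<lambda>s i. s i + d i) | d. d \<in> AES_V}"

definition aes_G :: "((nat \<Rightarrow> bit poly) \<Rightarrow> (nat \<Rightarrow> bit poly)) set" where
  "aes_G = generate (BijGroup AES_V) ((\<lambda>f. restrict f AES_V) ` (G_tilde \<union> G_bar \<union> {aes_M}))"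

end

theory Submission
  imports Defs "Jordan_Normal_Form.Determinant"
begin

abbreviation "P \<equiv> aes_poly"
lemma two0: "(2::bit poly) = 0"
  by (simp add: numeral_poly)
lemma deg_P: "degree aes_poly = 8" by (simp add: aes_poly_def)
lemma P_nz: "aes_poly \<noteq> 0" using deg_P by auto
lemma mod_small: "degree x < 8 \<Longrightarrow> x mod aes_poly = x"
  by (simp add: deg_P mod_poly_less)
lemma deg_mod: "degree (x mod aes_poly) < 8"
proof (cases "x mod aes_poly = 0")
  case False then show ?thesis using degree_mod_less'[OF P_nz False] deg_P by simp
qed simp
lemma gf_mul_GF: "gf_mul a b \<in> GF" by (simp add: GF_def gf_mul_def deg_mod)
lemma GF_add: "a \<in> GF \<Longrightarrow> b \<in> GF \<Longrightarrow> a + b \<in> GF"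
  unfolding GF_def using degree_add_le_max[of a b] by simp
lemma GF_sum: "(\<And>i. i \<in> A \<Longrightarrow> f i \<in> GF) \<Longrightarrow> sum f A \<in> GF"
proof (induction A rule: infinite_finite_induct)
  case (infinite A) then show ?case by (simp add: GF_def)
next
  case empty then show ?case by (simp add: GF_def)
next
  case (insert x F) then show ?case by (simp add: GF_add)
qed
lemma sum_mod: "(\<Sum>i\<in>A. f i mod (z::'a::field poly)) = sum f A mod z"
proof (induction A rule: infinite_finite_induct)
  case (insert x F) then show ?case by (simp add: poly_mod_add_left)
qed auto

definition opK :: "(nat \<Rightarrow> nat \<Rightarrow> bit poly) \<Rightarrow> (nat \<Rightarrow> bit poly) \<Rightarrow> (nat \<Rightarrow> bit poly)" where
  "opK K s = (\<lambda>i. if i < 16 then (\<Sum>j<4. K (i mod 4) j * s (4 * (i div 4) + j)) mod aes_poly else 0)"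

lemma MC_opK: "mix_columns = opK mc_coef"
proof (intro ext)
  fix s i show "mix_columns s i = opK mc_coef s i"
    unfolding mix_columns_def opK_def gf_mul_def using sum_mod[of "\<lambda>k. mc_coef (i mod 4) k * s (4 * (i div 4) + k)" P "{..<4}"] by simp
qed

definition kmul :: "(nat \<Rightarrow> nat \<Rightarrow> bit poly) \<Rightarrow> (nat \<Rightarrow> nat \<Rightarrow> bit poly) \<Rightarrow> (nat \<Rightarrow> nat \<Rightarrow> bit poly)" where
  "kmul K L = (\<lambda>r j. \<Sum>k<4. K r k * L k j)"

lemma idx: "(i::nat) < 16 \<Longrightarrow> k < 4 \<Longrightarrow> 4 * (i div 4) + k < 16" by presburger
lemma idx2: "k < 4 \<Longrightarrow> (4 * c + k) div 4 = c \<and> (4 * c + k) mod 4 = (k::nat)" by auto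

lemma opK_comp: "opK K (opK L s) = opK (kmul K L) s"
proof
  fix i
  show "opK K (opK L s) i = opK (kmul K L) s i"
  proof (cases "i < 16")
    case True
    define c where "c = i div 4"
    define r where "r = i mod 4"
    have e1: "opK K (opK L s) i = (\<Sum>k<4. K r k * opK L s (4*c+k)) mod P"
      using True by (simp add: opK_def c_def r_def)
    have e2: "opK L s (4*c+k) = (\<Sum>j<4. L k j * s (4 * c + j)) mod P" if "k<4" for k
      using idx[OF True that] idx2[OF that] that by (simp add: opK_def c_def)
    have "opK K (opK L s) i = (\<Sum>k<4. K r k * ((\<Sum>j<4. L k j * s (4 * c + j)) mod P)) mod P"
      unfolding e1 by (intro arg_cong[where f="\<lambda>x. x mod P"] sum.cong) (auto simp: e2)
    also have "\<dots> = (\<Sum>k<4. (K r k * ((\<Sum>j<4. L k j * s (4 * c + j)) mod P)) mod P) mod P"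
      by (simp add: sum_mod)
    also have "\<dots> = (\<Sum>k<4. (K r k * ((\<Sum>j<4. L k j * s (4 * c + j)))) mod P) mod P"
      by (simp add: mod_mult_right_eq)
    also have "\<dots> = (\<Sum>k<4. K r k * (\<Sum>j<4. L k j * s (4 * c + j))) mod P"
      by (simp add: sum_mod)
    also have "(\<Sum>k<4. K r k * (\<Sum>j<4. L k j * s (4 * c + j))) = (\<Sum>j<4. kmul K L r j * s (4 * c + j))"
      unfolding kmul_def sum_distrib_left sum_distrib_right
      by (subst sum.swap) (simp add: mult.assoc)
    finally show ?thesis using True unfolding opK_def c_def r_def by simp
  qed (simp add: opK_def)
qed

lemma sum4: "(\<Sum>k<(4::nat). f k) = f 0 + f 1 + f 2 + (f 3 :: 'a::comm_monoid_add)"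
  by (simp add: eval_nat_numeral)

definition C2 :: "nat \<Rightarrow> nat \<Rightarrow> bit poly" where
  "C2 r j = (if j = r then [:1,0,1:] else if j = (r + 2) mod 4 then [:0,0,1:] else 0)"

lemma mc_tab: "mc_coef 0 0 = [:0,1:]" "mc_coef 0 1 = [:1,1:]" "mc_coef 0 2 = 1" "mc_coef 0 3 = 1"
  "mc_coef 1 0 = 1" "mc_coef 1 1 = [:0,1:]" "mc_coef 1 2 = [:1,1:]" "mc_coef 1 3 = 1"
  "mc_coef 2 0 = 1" "mc_coef 2 1 = 1" "mc_coef 2 2 = [:0,1:]" "mc_coef 2 3 = [:1,1:]"
  "mc_coef 3 0 = [:1,1:]" "mc_coef 3 1 = 1" "mc_coef 3 2 = 1" "mc_coef 3 3 = [:0,1:]"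
  by (simp_all add: mc_coef_def Let_def xbar_def one_pCons)

lemma cases4: "(r::nat) < 4 \<Longrightarrow> r = 0 \<or> r = 1 \<or> r = 2 \<or> r = 3" by auto

lemma C2: "r < 4 \<Longrightarrow> j < 4 \<Longrightarrow> kmul mc_coef mc_coef r j = C2 r j"
  apply (drule cases4)+
  by (elim disjE; simp only: kmul_def sum4 C2_def mc_tab; simp add: one_pCons)

definition Id4 :: "nat \<Rightarrow> nat \<Rightarrow> bit poly" where "Id4 r j = (if r = j then 1 else 0)"

lemma C4: "r < 4 \<Longrightarrow> j < 4 \<Longrightarrow> kmul C2 C2 r j = Id4 r j"
  apply (drule cases4)+
  by (elim disjE; simp only: kmul_def sum4; simp add: C2_def Id4_def one_pCons)

lemma opK_cong: "(\<And>r j. r < 4 \<Longrightarrow> j < 4 \<Longrightarrow> K r j = L r j) \<Longrightarrow> opK K = opK L"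
  unfolding opK_def by (intro ext) (auto intro!: sum.cong)

lemma opK_Id: "s \<in> AES_V \<Longrightarrow> opK Id4 s = s"
proof
  fix i assume s: "s \<in> AES_V"
  show "opK Id4 s i = s i"
  proof (cases "i < 16")
    case True
    have "(\<Sum>j<4. Id4 (i mod 4) j * s (4 * (i div 4) + j)) = s (4 * (i div 4) + i mod 4)"
      unfolding Id4_def by (simp add: if_distrib[of "\<lambda>x. x * _"] cong: if_cong)
    also have "\<dots> = s i" by simp
    finally show ?thesis using True s mod_small unfolding opK_def AES_V_def GF_def by simp
  next
    case False then show ?thesis using s unfolding opK_def AES_V_def by simp
  qed
qed

lemma MC4: "s \<in> AES_V \<Longrightarrow> mix_columns (mix_columns (mix_columns (mix_columns s))) = s"
proof -
  assume s: "s \<in> AES_V"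
  have cc: "opK mc_coef (opK mc_coef t) = opK C2 t" for t
    unfolding opK_comp using opK_cong[of "kmul mc_coef mc_coef" C2] C2 by simp
  have "mix_columns (mix_columns (mix_columns (mix_columns s))) = opK C2 (opK C2 s)"
    unfolding MC_opK cc by simp
  also have "\<dots> = opK Id4 s" unfolding opK_comp using opK_cong[of "kmul C2 C2" Id4] C4 by simp
  finally show ?thesis using opK_Id[OF s] by simp
qed

lemma lt16: "(j::nat) < 16 \<Longrightarrow> j = 0 \<or> j = 1 \<or> j = 2 \<or> j = 3 \<or> j = 4 \<or> j = 5 \<or> j = 6 \<or> j = 7 \<or>
   j = 8 \<or> j = 9 \<or> j = 10 \<or> j = 11 \<or> j = 12 \<or> j = 13 \<or> j = 14 \<or> j = 15" by (auto simp: eval_nat_numeral less_Suc_eq)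

lemma sp_set: "set shift_perm = {..<16}"
proof
  show "set shift_perm \<subseteq> {..<16}" by (auto simp: shift_perm_def)
  show "{..<16} \<subseteq> set shift_perm"
  proof
    fix j assume "j \<in> {..<(16::nat)}"
    then have "j < 16" by simp
    then show "j \<in> set shift_perm" by (elim lt16[elim_format] disjE) (simp_all add: shift_perm_def)
  qed
qed
lemma sp_len: "length shift_perm = 16" by (simp add: shift_perm_def)
lemma sp_lt: "i < 16 \<Longrightarrow> shift_perm ! i < 16"
  using nth_mem[of i shift_perm] sp_len sp_set by auto
lemma sp_surj: "j < 16 \<Longrightarrow> \<exists>i<16. shift_perm ! i = j"
  using sp_set sp_len by (metis in_set_conv_nth lessThan_iff)

lemma opK_V: "opK K s \<in> AES_V"
  unfolding opK_def AES_V_def GF_def by (simp add: deg_mod)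
lemma MC_V: "mix_columns s \<in> AES_V" unfolding MC_opK by (rule opK_V)
lemma SR_V: "s \<in> AES_V \<Longrightarrow> shift_rows s \<in> AES_V"
  unfolding AES_V_def shift_rows_def using sp_lt by auto
lemma M_V: "s \<in> AES_V \<Longrightarrow> aes_M s \<in> AES_V"
  unfolding aes_M_def using MC_V by simp

lemma SR_inj: "inj_on shift_rows AES_V"
proof
  fix s t assume s: "s \<in> AES_V" and t: "t \<in> AES_V" and e: "shift_rows s = shift_rows t"
  show "s = t"
  proof
    fix j show "s j = t j"
    proof (cases "j < 16")
      case True
      then obtain i where i: "i < 16" "shift_perm ! i = j" using sp_surj by blast
      have "shift_rows s i = shift_rows t i" using e by simp
      then show ?thesis using i unfolding shift_rows_def by simp
    next
      case False then show ?thesis using s t unfolding AES_V_def by simp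
    qed
  qed
qed

lemma MC_inj: "inj_on mix_columns AES_V"
  by (rule inj_on_inverseI[where g="\<lambda>s. mix_columns (mix_columns (mix_columns s))"]) (simp add: MC4)

lemma M_inj: "inj_on aes_M AES_V"
  unfolding aes_M_def using MC_inj SR_inj SR_V
  by (metis comp_inj_on inj_on_subset image_subsetI)

lemma opK_add: "opK K (\<lambda>i. u i + v i) = (\<lambda>i. opK K u i + opK K v i)"
  unfolding opK_def by (intro ext) (simp add: distrib_left sum.distrib poly_mod_add_left)

lemma M_add: "aes_M (\<lambda>i. u i + v i) = (\<lambda>i. aes_M u i + aes_M v i)"
proof -
  have "shift_rows (\<lambda>i. u i + v i) = (\<lambda>i. shift_rows u i + shift_rows v i)"
    unfolding shift_rows_def by auto
  then show ?thesis unfolding aes_M_def MC_opK by (simp add: opK_add)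
qed

definition aff :: "bit poly \<Rightarrow> bit poly \<Rightarrow> (nat \<Rightarrow> bit poly) \<Rightarrow> (nat \<Rightarrow> bit poly)" where
  "aff a c s = (\<lambda>i. if i < 16 then gf_mul a (s i) + c else 0)"

lemma mc_rowsum: "r < 4 \<Longrightarrow> (\<Sum>j<4. mc_coef r j) = 1"
  apply (drule cases4)
  by (elim disjE; simp only: sum4 mc_tab; simp add: one_pCons)

lemma SR_aff: "shift_rows (aff a c s) = aff a c (shift_rows s)"
  unfolding shift_rows_def aff_def using sp_lt by auto

lemma MC_aff: assumes c: "c \<in> GF" shows "mix_columns (aff a c s) = aff a c (mix_columns s)"
proof
  fix i show "mix_columns (aff a c s) i = aff a c (mix_columns s) i"
  proof (cases "i < 16")
    case True
    define r where "r = i mod 4"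
    define b where "b = 4 * (i div 4)"
    have r4: "r < 4" unfolding r_def by simp
    have cm: "c mod P = c" using c mod_small unfolding GF_def by simp
    have "mix_columns (aff a c s) i = (\<Sum>j<4. mc_coef r j * aff a c s (b+j)) mod P"
      using True by (simp add: MC_opK opK_def r_def b_def)
    also have "\<dots> = (\<Sum>j<4. mc_coef r j * (gf_mul a (s (b + j)) + c)) mod P"
      using idx[OF True] by (intro arg_cong[where f="\<lambda>x. x mod P"] sum.cong) (auto simp: aff_def b_def)
    also have "\<dots> = (\<Sum>j<4. mc_coef r j * ((a * s (b + j)) mod P)) mod P + ((\<Sum>j<4. mc_coef r j) * c) mod P"
      unfolding gf_mul_def by (simp add: distrib_left sum.distrib poly_mod_add_left sum_distrib_right)
    also have "(\<Sum>j<4. mc_coef r j * ((a * s (b + j)) mod P)) mod P = (\<Sum>j<4. (mc_coef r j * ((a * s (b + j)) mod P)) mod P) mod P"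
      by (simp add: sum_mod)
    also have "\<dots> = (\<Sum>j<4. (mc_coef r j * (a * s (b + j))) mod P) mod P"
      by (simp add: mod_mult_right_eq)
    also have "\<dots> = (\<Sum>j<4. a * (mc_coef r j * s (b + j))) mod P"
      by (simp add: sum_mod mult.left_commute)
    also have "\<dots> = (a * (\<Sum>j<4. mc_coef r j * s (b + j))) mod P"
      by (simp add: sum_distrib_left)
    also have "\<dots> = (a * ((\<Sum>j<4. mc_coef r j * s (b + j)) mod P)) mod P"
      by (simp add: mod_mult_right_eq)
    finally show ?thesis using True mc_rowsum[OF r4] cm
      unfolding MC_opK opK_def aff_def gf_mul_def r_def b_def by simp
  next
    case False then show ?thesis unfolding MC_opK opK_def aff_def by simp
  qed
qed

lemma M_aff: "c \<in> GF \<Longrightarrow> aes_M (aff a c s) = aff a c (aes_M s)"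
  unfolding aes_M_def by (simp add: SR_aff MC_aff)

lemma Mk_V: "s \<in> AES_V \<Longrightarrow> (aes_M ^^ k) s \<in> AES_V"
  by (induction k) (auto simp: M_V)
lemma Mk_add: "(aes_M ^^ k) (\<lambda>i. u i + v i) = (\<lambda>i. (aes_M ^^ k) u i + (aes_M ^^ k) v i)"
  by (induction k) (auto simp: M_add)
lemma Mk_aff: "c \<in> GF \<Longrightarrow> (aes_M ^^ k) (aff a c s) = aff a c ((aes_M ^^ k) s)"
  by (induction k) (auto simp: M_aff)

lemma P_split: "aes_poly = 1 + xbar * [:1,0,1,1,0,0,0,1:]" by (simp add: aes_poly_def xbar_def one_pCons)

lemma gen_xb: "(p::'a::comm_ring_1) - x * q = 1 \<Longrightarrow> (- q) * x + 1 * p = 1"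
  by (simp add: algebra_simps)
lemma gen_mod1: "(u::'a::comm_ring_1) * a + v * p = 1 \<Longrightarrow> a = m + d * p \<Longrightarrow> u * m + (v + u * d) * p = 1"
  by (simp add: algebra_simps)
lemma gen_mod2: "(u::'a::comm_ring_1) * m + v * p = 1 \<Longrightarrow> m = a - d * p \<Longrightarrow> u * a + (v - u * d) * p = 1"
  by (simp add: algebra_simps)
lemma gen_mult: "(u::'a::comm_ring_1) * a + v * p = 1 \<Longrightarrow> u' * b + v' * p = 1 \<Longrightarrow>
   (u * u') * (a * b) + (u * a * v' + v * (u' * b + v' * p)) * p = 1"
proof -
  assume 1: "u * a + v * p = 1" and 2: "u' * b + v' * p = 1"
  have "(u * a + v * p) * (u' * b + v' * p) = 1" using 1 2 by simp
  then show ?thesis by (simp add: algebra_simps)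
qed

definition bez :: "bit poly \<Rightarrow> bool" where "bez a \<longleftrightarrow> (\<exists>u v. u * a + v * aes_poly = 1)"

lemma bez_mult: assumes "bez a" "bez b" shows "bez (a * b)"
proof -
  obtain u v where 1: "u * a + v * P = 1" using assms(1) unfolding bez_def by blast
  obtain u' v' where 2: "u' * b + v' * P = 1" using assms(2) unfolding bez_def by blast
  have "(u * u') * (a * b) + (u * a * v' + v * (u' * b + v' * P)) * P = 1"
    by (rule gen_mult[OF 1 2])
  then show ?thesis unfolding bez_def by blast
qed
lemma bez_one: "bez 1" unfolding bez_def by (rule exI[of _ 1], rule exI[of _ 0]) simp
lemma bez_pow: "bez a \<Longrightarrow> bez (a ^ n)"
  by (induction n) (simp_all add: bez_one bez_mult)
lemma bez_factor: "bez (a * b) \<Longrightarrow> bez a"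
  unfolding bez_def by (metis mult.assoc mult.commute)
lemma bez_mod: "bez a \<Longrightarrow> bez (a mod P)"
proof -
  assume "bez a"
  then obtain u v where 1: "u * a + v * P = 1" unfolding bez_def by blast
  have "a = a mod P + (a div P) * P" by simp
  then have "u * (a mod P) + (v + u * (a div P)) * P = 1" using gen_mod1[OF 1] by blast
  then show ?thesis unfolding bez_def by blast
qed
lemma bez_of_mod: "bez (a mod P) \<Longrightarrow> bez a"
proof -
  assume "bez (a mod P)"
  then obtain u v where 1: "u * (a mod P) + v * P = 1" unfolding bez_def by blast
  have "a mod P = a - (a div P) * P" by (simp add: minus_div_mult_eq_mod)
  then have "u * a + (v - u * (a div P)) * P = 1" using gen_mod2[OF 1] by blast
  then show ?thesis unfolding bez_def by blast
qed
lemma bez_dvd: assumes "bez a" "P dvd a * x" shows "P dvd x"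
proof -
  obtain u v where 1: "u * a + v * P = 1" using assms(1) unfolding bez_def by blast
  have "u * (a * x) + (v * x) * P = (u * a + v * P) * x" by (simp add: algebra_simps)
  then have "x = u * (a * x) + (v * x) * P" using 1 by simp
  also have "P dvd \<dots>" using assms(2) by simp
  finally show ?thesis .
qed
lemma bez_nz: "bez a \<Longrightarrow> a mod P \<noteq> 0"
proof
  assume "bez a" "a mod P = 0"
  then have "bez 0" using bez_mod[of a] by simp
  then obtain v where "v * P = 1" unfolding bez_def by auto
  then have "P dvd 1" using dvd_triv_right[of P v] by simp
  then have "degree P \<le> 0" using dvd_imp_degree_le[of P 1] by simp
  then show False using deg_P by simp
qed

lemma bez_xbar: "bez xbar"
proof -
  have "aes_poly - xbar * [:1,0,1,1,0,0,0,1:] = 1"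
    by (subst P_split) (simp only: add_diff_cancel_right')
  then have "(- [:1,0,1,1,0,0,0,1:]) * xbar + 1 * aes_poly = 1" by (rule gen_xb)
  then show ?thesis unfolding bez_def by blast
qed

lemma xbar_GF: "xbar \<in> GF" "xbar \<noteq> 0" "xbar \<noteq> 1"
  by (auto simp: xbar_def GF_def one_pCons)

lemma gf_pow0: "gf_pow g 0 = 1"
  by (simp add: gf_pow_def mod_small)

lemma prim_bez: assumes "gf_primitive g" shows "bez g"
proof -
  obtain i where i: "xbar = gf_pow g i" using assms xbar_GF unfolding gf_primitive_def by blast
  have "i \<noteq> 0"
  proof
    assume "i = 0" then have "xbar = 1" using i gf_pow0 by simp
    with xbar_GF show False by simp
  qed
  have "g ^ i = g * g ^ (i - 1)" using \<open>i \<noteq> 0\<close> by (simp add: power_eq_if)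
  moreover have "bez (g ^ i)" using bez_xbar i unfolding gf_pow_def by (metis bez_of_mod)
  ultimately show ?thesis using bez_factor by metis
qed

lemma GF_bez: assumes "gf_primitive g" "a \<in> GF" "a \<noteq> 0" shows "bez a"
proof -
  obtain i where i: "a = gf_pow g i" using assms unfolding gf_primitive_def by blast
  show ?thesis unfolding i gf_pow_def by (rule bez_mod, rule bez_pow, rule prim_bez[OF assms(1)])
qed

lemma GF_eq_if_dvd: "x \<in> GF \<Longrightarrow> y \<in> GF \<Longrightarrow> aes_poly dvd x - y \<Longrightarrow> x = y"
proof (rule ccontr)
  assume x: "x \<in> GF" and y: "y \<in> GF" and d: "aes_poly dvd x - y" and ne: "x \<noteq> y"
  have "degree (x - y) < 8" using x y unfolding GF_def using degree_diff_le_max[of x y] by simp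
  moreover have "degree aes_poly \<le> degree (x - y)" using dvd_imp_degree_le[OF d] ne by simp
  ultimately show False using deg_P by simp
qed

lemma mul_inj: assumes "gf_primitive g" "a \<in> GF" "a \<noteq> 0" shows "inj_on (gf_mul a) GF"
proof
  fix y z assume y: "y \<in> GF" and z: "z \<in> GF" and e: "gf_mul a y = gf_mul a z"
  have "aes_poly dvd a * y - a * z" using e unfolding gf_mul_def by (simp add: mod_eq_dvd_iff)
  then have "aes_poly dvd a * (y - z)" by (simp add: right_diff_distrib)
  then have "aes_poly dvd (y - z)"
    using GF_bez[OF assms] bez_dvd by blast
  then show "y = z" using GF_eq_if_dvd y z by blast
qed

lemma UNIV_bit: "(UNIV :: bit set) = {0, 1}" by auto

lemma GF_Poly: "GF = Poly ` {xs. set xs \<subseteq> (UNIV::bit set) \<and> length xs = 8}"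
proof
  show "Poly ` {xs. set xs \<subseteq> (UNIV::bit set) \<and> length xs = 8} \<subseteq> GF"
  proof
    fix p assume "p \<in> Poly ` {xs. set xs \<subseteq> (UNIV::bit set) \<and> length xs = 8}"
    then obtain xs where p: "p = Poly xs" and l: "length xs = 8" by auto
    have "degree p \<le> 7" by (rule degree_le) (simp add: p l nth_default_def)
    then show "p \<in> GF" by (simp add: GF_def)
  qed
  show "GF \<subseteq> Poly ` {xs. set xs \<subseteq> (UNIV::bit set) \<and> length xs = 8}"
  proof
    fix p assume p: "p \<in> GF"
    have "p = Poly (map (coeff p) [0..<8])"
    proof (rule poly_eqI)
      fix n show "coeff p n = coeff (Poly (map (coeff p) [0..<8])) n"
        using p unfolding GF_def by (cases "n < 8") (auto simp: nth_default_def coeff_eq_0)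
    qed
    then show "p \<in> Poly ` {xs. set xs \<subseteq> (UNIV::bit set) \<and> length xs = 8}" by force
  qed
qed

lemma Poly_inj: "inj_on Poly {xs. set xs \<subseteq> (UNIV::bit set) \<and> length xs = n}"
proof
  fix xs ys :: "bit list" assume "xs \<in> {xs. set xs \<subseteq> UNIV \<and> length xs = n}" "ys \<in> {xs. set xs \<subseteq> UNIV \<and> length xs = n}"
    and e: "Poly xs = Poly ys"
  then have l: "length xs = n" "length ys = n" by auto
  show "xs = ys"
  proof (rule nth_equalityI)
    show "length xs = length ys" using l by simp
    fix i assume "i < length xs"
    then show "xs ! i = ys ! i" using arg_cong[OF e, of "\<lambda>p. coeff p i"] l by (simp add: nth_default_def)
  qed
qed

lemma card_GF: "card GF = 256"
proof -
  have "card GF = card {xs. set xs \<subseteq> (UNIV::bit set) \<and> length xs = 8}"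
    unfolding GF_Poly by (rule card_image[OF Poly_inj])
  also have "\<dots> = card (UNIV::bit set) ^ 8" by (subst card_lists_length_eq) (simp_all add: UNIV_bit)
  also have "card (UNIV::bit set) = 2" by (simp add: UNIV_bit)
  finally show ?thesis by simp
qed

lemma finite_GF: "finite GF" using card_GF card.infinite by fastforce

lemma bij_endo: "finite A \<Longrightarrow> inj_on f A \<Longrightarrow> f ` A \<subseteq> A \<Longrightarrow> bij_betw f A A"
  by (simp add: bij_betw_def endo_inj_surj)

lemma aff_bij: assumes "gf_primitive g" "a \<in> GF" "a \<noteq> 0" "c \<in> GF"
  shows "bij_betw (\<lambda>y. gf_mul a y + c) GF GF"
proof (rule bij_endo[OF finite_GF])
  show "inj_on (\<lambda>y. gf_mul a y + c) GF" using mul_inj[OF assms(1-3)] by (simp add: inj_on_def)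
  show "(\<lambda>y. gf_mul a y + c) ` GF \<subseteq> GF" using gf_mul_GF GF_add assms(4) by auto
qed

lemma tr_bij: "c \<in> GF \<Longrightarrow> bij_betw (\<lambda>y. y + c) GF GF"
  by (rule bij_endo[OF finite_GF]) (auto simp: inj_on_def GF_add)

lemma gpow_GF: "gf_pow g i \<in> GF" by (simp add: gf_pow_def GF_def deg_mod)

lemma gpow_nz: "gf_primitive g \<Longrightarrow> gf_pow g i \<noteq> 0"
  unfolding gf_pow_def by (rule bez_nz, rule bez_pow, rule prim_bez)

lemma card_GF0: "card (GF - {0}) = 255"
proof -
  have "0 \<in> GF" by (simp add: GF_def)
  then show ?thesis using card_GF finite_GF by (simp add: card_Diff_singleton)
qed

lemma exist_m: assumes prim: "gf_primitive g" shows "\<exists>m. 1 \<le> m \<and> m \<le> 255 \<and> gf_pow g m = 1"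
proof -
  have "\<not> inj_on (gf_pow g) {1..256::nat}"
  proof
    assume "inj_on (gf_pow g) {1..256::nat}"
    moreover have "gf_pow g ` {1..256} \<subseteq> GF - {0}" using gpow_GF gpow_nz[OF prim] by auto
    ultimately have "card {1..256::nat} \<le> card (GF - {0})"
      using card_inj_on_le finite_GF by blast
    then show False using card_GF0 by simp
  qed
  then obtain a b where ab: "a \<in> {1..256::nat}" "b \<in> {1..256::nat}" "a \<noteq> b" "gf_pow g a = gf_pow g b"
    unfolding inj_on_def by blast
  have key: "\<exists>m. 1 \<le> m \<and> m \<le> 255 \<and> gf_pow g m = 1"
    if "a \<in> {1..256::nat}" "b \<in> {1..256::nat}" "a < b" "gf_pow g a = gf_pow g b" for a b
  proof -
    have "g ^ b = g ^ a * g ^ (b - a)" using that(3) by (simp flip: power_add)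
    have "P dvd g ^ b - g ^ a" using that(4)[symmetric] unfolding gf_pow_def by (simp add: mod_eq_dvd_iff)
    also have "g ^ b - g ^ a = g ^ a * (g ^ (b - a) - 1)"
      using \<open>g ^ b = g ^ a * g ^ (b - a)\<close> by (simp add: right_diff_distrib)
    finally have "P dvd g ^ (b - a) - 1" using bez_dvd bez_pow prim_bez[OF prim] by blast
    then have "g ^ (b - a) mod P = 1 mod P" by (simp add: mod_eq_dvd_iff)
    then have "gf_pow g (b - a) = 1" unfolding gf_pow_def using mod_small[of 1] by simp
    then show ?thesis using that by (intro exI[of _ "b - a"]) auto
  qed
  show ?thesis
  proof (cases "a < b")
    case True then show ?thesis using key ab by blast
  next
    case False then have "b < a" using ab(3) by simp
    then show ?thesis using key ab by metis
  qed
qed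

lemma exps: assumes prim: "gf_primitive g" and y: "y \<in> GF" "y \<noteq> 0"
  shows "\<exists>p. 1 \<le> p \<and> p \<le> 255 \<and> y = gf_pow g p"
proof -
  obtain i where i: "y = gf_pow g i" using prim y unfolding gf_primitive_def by blast
  obtain m where m: "1 \<le> m" "m \<le> 255" "gf_pow g m = 1" using exist_m[OF prim] by blast
  have e1: "g ^ i = (g ^ m) ^ (i div m) * g ^ (i mod m)"
    by (simp only: power_mult[symmetric] power_add[symmetric] mult_div_mod_eq)
  have gm: "g ^ m mod P = 1" using m(3) unfolding gf_pow_def .
  have e2: "(g ^ m) ^ (i div m) mod P = 1"
  proof -
    have "(g ^ m) ^ (i div m) mod P = ((g ^ m mod P) ^ (i div m)) mod P" by (rule power_mod[symmetric])
    also have "\<dots> = 1" unfolding gm using mod_small[of 1] by simp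
    finally show ?thesis .
  qed
  have "g ^ i mod P = (((g ^ m) ^ (i div m) mod P) * g ^ (i mod m)) mod P"
    unfolding e1 by (rule mod_mult_left_eq[symmetric])
  also have "\<dots> = g ^ (i mod m) mod P" unfolding e2 by simp
  finally have yi: "y = gf_pow g (i mod m)" using i unfolding gf_pow_def by simp
  show ?thesis
  proof (cases "i mod m = 0")
    case True then show ?thesis using yi m gf_pow0 by (intro exI[of _ m]) simp
  next
    case False
    have "i mod m < m" using m(1) by simp
    then show ?thesis using yi False m by (intro exI[of _ "i mod m"]) linarith
  qed
qed

definition iota :: "bit poly \<Rightarrow> bit poly \<Rightarrow> nat" where
  "iota g y = (SOME p. p < 256 \<and> eps' g y p = 1)"

lemma eps'_one: "eps' g y p = 1 \<longleftrightarrow> (if y = 0 then p = 0 else 1 \<le> p \<and> p \<le> 255 \<and> y = gf_pow g p)"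
  by (simp add: eps'_def)

lemma eps'_unique: "eps' g y p = 1 \<Longrightarrow> eps' g z p = 1 \<Longrightarrow> y = z"
  unfolding eps'_one by (auto split: if_splits)

context fixes g assumes prim: "gf_primitive g"
begin

lemma iota_ok: "y \<in> GF \<Longrightarrow> iota g y < 256 \<and> eps' g y (iota g y) = 1"
proof -
  assume y: "y \<in> GF"
  have "\<exists>p. p < 256 \<and> eps' g y p = 1"
  proof (cases "y = 0")
    case True then show ?thesis by (intro exI[of _ 0]) (simp add: eps'_one)
  next
    case False
    then obtain p where "1 \<le> p" "p \<le> 255" "y = gf_pow g p" using exps[OF prim y False] by blast
    then show ?thesis using False by (intro exI[of _ p]) (simp add: eps'_one)
  qed
  then show ?thesis unfolding iota_def by (rule someI_ex)
qed

lemma iota_inj: "inj_on (iota g) GF"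
  by (rule inj_onI) (metis iota_ok eps'_unique)

lemma iota_bij: "bij_betw (iota g) GF {..<256}"
proof -
  have sub: "iota g ` GF \<subseteq> {..<256}" using iota_ok by auto
  have "card (iota g ` GF) = card {..<256::nat}" using card_image[OF iota_inj] card_GF by simp
  then have "iota g ` GF = {..<256}" using card_subset_eq[OF _ sub] by simp
  then show ?thesis using iota_inj by (simp add: bij_betw_def)
qed

lemma eps_iota: assumes y: "y \<in> GF" and p: "p < 256" shows "eps' g y p = (if p = iota g y then 1 else 0)"
proof (cases "p = iota g y")
  case True then show ?thesis using iota_ok[OF y] by simp
next
  case False
  have "eps' g y p \<noteq> 1"
  proof
    assume e: "eps' g y p = 1"
    have "p \<in> iota g ` GF" using iota_bij p by (simp add: bij_betw_def)
    then obtain z where z: "z \<in> GF" "p = iota g z" by blast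
    then have "eps' g z p = 1" using iota_ok by simp
    then have "z = y" using e eps'_unique by blast
    then show False using False z by simp
  qed
  then show ?thesis using False by (simp add: eps'_def split: if_splits)
qed
end

lemma finite_V: "finite AES_V"
proof -
  have "AES_V \<subseteq> (\<lambda>f i. if i < 16 then f i else 0) ` (PiE {..<16} (\<lambda>_. GF))"
  proof
    fix s assume s: "s \<in> AES_V"
    have "s = (\<lambda>i. if i < 16 then restrict s {..<16} i else 0)" using s unfolding AES_V_def by auto
    moreover have "restrict s {..<16} \<in> PiE {..<16} (\<lambda>_. GF)" using s unfolding AES_V_def by auto
    ultimately show "s \<in> (\<lambda>f i. if i < 16 then f i else 0) ` (PiE {..<16} (\<lambda>_. GF))" by blast
  qed
  moreover have "finite (PiE {..<16::nat} (\<lambda>_. GF))" using finite_GF by (simp add: finite_PiE)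
  ultimately show ?thesis using finite_subset by blast
qed

lemma Mk_inj: "inj_on (aes_M ^^ k) AES_V"
proof (induction k)
  case 0 then show ?case by simp
next
  case (Suc k)
  have "inj_on (aes_M \<circ> (aes_M ^^ k)) AES_V"
    by (rule comp_inj_on[OF Suc]) (rule inj_on_subset[OF M_inj], use Mk_V in auto)
  then show ?case by (simp add: comp_def)
qed

lemma order_ex: "\<exists>n>0. \<forall>v\<in>AES_V. (aes_M ^^ n) v = v"
proof -
  let ?F = "\<lambda>i. restrict (aes_M ^^ i) AES_V"
  have "range ?F \<subseteq> PiE AES_V (\<lambda>_. AES_V)" using Mk_V by auto
  moreover have "finite (PiE AES_V (\<lambda>_. AES_V))" using finite_V by (simp add: finite_PiE)
  ultimately have "finite (range ?F)" using finite_subset by blast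
  then have "\<not> inj ?F" using finite_imageD infinite_UNIV_nat by blast
  then obtain a b where ab: "a \<noteq> b" "?F a = ?F b" unfolding inj_def by blast
  have key: "\<exists>n>0. \<forall>v\<in>AES_V. (aes_M ^^ n) v = v" if "a < b" "?F a = ?F b" for a b
  proof (intro exI[of _ "b - a"] conjI ballI)
    show "b - a > 0" using that by simp
    fix v assume v: "v \<in> AES_V"
    have "(aes_M ^^ (a + (b - a))) v = (aes_M ^^ a) ((aes_M ^^ (b - a)) v)" by (simp add: funpow_add)
    then have "(aes_M ^^ a) ((aes_M ^^ (b - a)) v) = (aes_M ^^ b) v" using that(1) by simp
    also have "\<dots> = (aes_M ^^ a) v" using fun_cong[OF that(2), of v] v by simp
    finally show "(aes_M ^^ (b - a)) v = v" using Mk_inj[of a] v Mk_V[OF v] by (auto simp: inj_on_def)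
  qed
  show ?thesis
  proof (cases "a < b")
    case True then show ?thesis using key ab by blast
  next
    case False then have "b < a" using ab(1) by simp
    then show ?thesis using key ab by metis
  qed
qed

lemma order_pos: "aes_order > 0" and order_id: "v \<in> AES_V \<Longrightarrow> (aes_M ^^ aes_order) v = v"
proof -
  have "0 < aes_order \<and> (\<forall>v \<in> AES_V. (aes_M ^^ aes_order) v = v)"
    unfolding aes_order_def by (rule LeastI_ex) (use order_ex in blast)
  then show "aes_order > 0" "v \<in> AES_V \<Longrightarrow> (aes_M ^^ aes_order) v = v" by auto
qed

lemma dec: assumes "j < 16" "q < 256"
  shows "(4096 * k + 256 * j + q) div 4096 = k" "((4096 * k + 256 * j + q) mod 4096) div 256 = j"
    "(4096 * k + 256 * j + q) mod 256 = (q::nat)"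
proof -
  have a: "256 * j + q < 4096" using assms by linarith
  have "(4096 * k + (256 * j + q)) div 4096 = k" using a by simp
  then show "(4096 * k + 256 * j + q) div 4096 = k" by (simp add: add.assoc)
  have "(4096 * k + (256 * j + q)) mod 4096 = 256 * j + q" using a by simp
  then show "((4096 * k + 256 * j + q) mod 4096) div 256 = j" using assms by (simp add: add.assoc)
  have "(4096 * k + 256 * j + q) = q + (16 * k + j) * 256" by simp
  then show "(4096 * k + 256 * j + q) mod 256 = q" using assms by (simp only: mod_mult_self1) simp
qed

lemma recomp: "(n::nat) = 4096 * (n div 4096) + 256 * ((n mod 4096) div 256) + n mod 256"
proof -
  have "n mod 4096 = 256 * ((n mod 4096) div 256) + (n mod 4096) mod 256" by simp
  moreover have "(n mod 4096) mod 256 = n mod 256" by (simp add: mod_mod_cancel)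
  ultimately show ?thesis by (metis add.assoc div_mult_mod_eq mult.commute)
qed

lemma jb: "(n mod 4096) div 256 < (16::nat)" by (simp add: less_mult_imp_div_less)

lemma alpha_nth: "n < 4096 * aes_order \<Longrightarrow>
  aes_alpha g v $ n = eps' g ((aes_M ^^ (n div 4096)) v ((n mod 4096) div 256)) (n mod 256)"
  unfolding aes_alpha_def by simp

lemma alpha_dim: "dim_vec (aes_alpha g v) = 4096 * aes_order"
  unfolding aes_alpha_def by simp

abbreviation "NN \<equiv> 4096 * aes_order"

lemma bij_lt: "finite A \<Longrightarrow> inj_on f A \<Longrightarrow> (\<And>x. x \<in> A \<Longrightarrow> f x \<in> A) \<Longrightarrow> bij_betw f A A"
  by (rule bij_endo) auto

lemma byte_perm:
  assumes prim: "gf_primitive g"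
    and fb: "\<And>k j. bij_betw (f k j) GF GF"
    and hf: "\<And>v k j. v \<in> AES_V \<Longrightarrow> j < 16 \<Longrightarrow> (aes_M ^^ k) (\<sigma> v) j = f k j ((aes_M ^^ k) v j)"
  shows "\<exists>\<pi>. bij_betw \<pi> {..<NN} {..<NN} \<and> (\<forall>v\<in>AES_V. \<forall>n<NN. aes_alpha g (\<sigma> v) $ n = aes_alpha g v $ \<pi> n)"
proof -
  define \<iota> where "\<iota> = iota g"
  have ib: "bij_betw \<iota> GF {..<256}" unfolding \<iota>_def by (rule iota_bij[OF prim])
  define \<rho> where "\<rho> k j = \<iota> \<circ> inv_into GF (f k j) \<circ> inv_into GF \<iota>" for k j
  have \<rho>b: "bij_betw (\<rho> k j) {..<256} {..<256}" for k j
    unfolding \<rho>_def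
    by (rule bij_betw_trans[OF bij_betw_inv_into[OF ib] bij_betw_trans[OF bij_betw_inv_into[OF fb] ib]])
  have \<rho>key: "\<rho> k j (\<iota> (f k j y)) = \<iota> y" if y: "y \<in> GF" for k j y
  proof -
    have fy: "f k j y \<in> GF" using fb y by (meson bij_betwE)
    have "inv_into GF \<iota> (\<iota> (f k j y)) = f k j y"
      using ib fy by (simp add: bij_betw_def inv_into_f_f)
    moreover have "inv_into GF (f k j) (f k j y) = y"
      using fb[of k j] y by (simp add: bij_betw_def inv_into_f_f)
    ultimately show ?thesis unfolding \<rho>_def by simp
  qed
  define \<pi> where "\<pi> n = 4096 * (n div 4096) + 256 * ((n mod 4096) div 256)
      + \<rho> (n div 4096) ((n mod 4096) div 256) (n mod 256)" for n
  have \<rho>lt: "\<rho> k j p < 256" if "p < 256" for k j p using \<rho>b[of k j] that by (auto dest: bij_betwE)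
  have \<pi>dec: "\<pi> n div 4096 = n div 4096" "(\<pi> n mod 4096) div 256 = (n mod 4096) div 256"
     "\<pi> n mod 256 = \<rho> (n div 4096) ((n mod 4096) div 256) (n mod 256)" for n
    unfolding \<pi>_def using dec[OF jb \<rho>lt] by simp_all
  have \<pi>lt: "\<pi> n < NN" if n: "n < NN" for n
  proof -
    have "n div 4096 < aes_order" using n by (simp add: less_mult_imp_div_less mult.commute)
    then have "4096 * (n div 4096) + 4096 \<le> NN" by simp
    moreover have "256 * ((n mod 4096) div 256) + \<rho> (n div 4096) ((n mod 4096) div 256) (n mod 256) < 4096"
      using jb[of n] \<rho>lt[of "n mod 256" "n div 4096" "(n mod 4096) div 256"] by simp
    ultimately show ?thesis unfolding \<pi>_def by linarith
  qed
  have \<pi>inj: "inj_on \<pi> {..<NN}"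
  proof
    fix a b assume a: "a \<in> {..<NN}" and b: "b \<in> {..<NN}" and e: "\<pi> a = \<pi> b"
    have 1: "a div 4096 = b div 4096" using \<pi>dec(1)[of a] \<pi>dec(1)[of b] e by simp
    have 2: "(a mod 4096) div 256 = (b mod 4096) div 256" using \<pi>dec(2)[of a] \<pi>dec(2)[of b] e by simp
    have "\<rho> (a div 4096) ((a mod 4096) div 256) (a mod 256) = \<rho> (a div 4096) ((a mod 4096) div 256) (b mod 256)"
      using \<pi>dec(3)[of a] \<pi>dec(3)[of b] e 1 2 by simp
    then have 3: "a mod 256 = b mod 256" using \<rho>b by (simp add: bij_betw_def inj_on_def)
    show "a = b" using recomp[of a] recomp[of b] 1 2 3 by simp
  qed
  have \<pi>bij: "bij_betw \<pi> {..<NN} {..<NN}" by (rule bij_lt) (use \<pi>inj \<pi>lt in auto)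
  have "aes_alpha g (\<sigma> v) $ n = aes_alpha g v $ \<pi> n" if v: "v \<in> AES_V" and n: "n < NN" for v n
  proof -
    define k where "k = n div 4096"
    define j where "j = (n mod 4096) div 256"
    define p where "p = n mod 256"
    have j16: "j < 16" unfolding j_def by (rule jb)
    have p256: "p < 256" unfolding p_def by simp
    define y where "y = (aes_M ^^ k) v j"
    have y: "y \<in> GF" using Mk_V[OF v, of k] j16 unfolding y_def AES_V_def by auto
    have fy: "f k j y \<in> GF" using fb y by (meson bij_betwE)
    have "aes_alpha g (\<sigma> v) $ n = eps' g (f k j y) p"
      using alpha_nth[OF n] hf[OF v j16] unfolding k_def j_def p_def y_def by simp
    also have "\<dots> = (if p = \<iota> (f k j y) then 1 else 0)" using eps_iota[OF prim fy p256] \<iota>_def by simp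
    also have "\<dots> = (if \<rho> k j p = \<iota> y then 1 else 0)"
    proof -
      have "\<iota> (f k j y) < 256" using ib fy by (auto dest: bij_betwE)
      then have "(p = \<iota> (f k j y)) = (\<rho> k j p = \<rho> k j (\<iota> (f k j y)))"
        using \<rho>b[of k j] p256 by (auto simp: bij_betw_def inj_on_def)
      then show ?thesis using \<rho>key[OF y] by simp
    qed
    also have "\<dots> = eps' g y (\<rho> k j p)" using eps_iota[OF prim y \<rho>lt[OF p256]] \<iota>_def by simp
    also have "\<dots> = aes_alpha g v $ \<pi> n"
      using alpha_nth[OF \<pi>lt[OF n]] \<pi>dec[of n] unfolding k_def j_def p_def y_def by simp
    finally show ?thesis .
  qed
  then show ?thesis using \<pi>bij by blast
qed

lemma M_perm:
  shows "\<exists>\<pi>. bij_betw \<pi> {..<NN} {..<NN} \<and> (\<forall>v\<in>AES_V. \<forall>n<NN. aes_alpha g (aes_M v) $ n = aes_alpha g v $ \<pi> n)"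
proof -
  define \<pi> where "\<pi> n = (if n + 4096 < NN then n + 4096 else n + 4096 - NN)" for n
  have N4: "4096 \<le> NN" using order_pos by simp
  have gen: "(if x + 4096 < N then x + 4096 else x + 4096 - N) < (N::nat)" if "x < N" "4096 \<le> N" for x N
    using that by auto
  have \<pi>lt: "\<pi> n < NN" if "n < NN" for n using gen[OF that N4] unfolding \<pi>_def .
  have \<pi>inj: "inj_on \<pi> {..<NN}"
    by (rule inj_onI) (auto simp: \<pi>_def split: if_splits)
  have \<pi>bij: "bij_betw \<pi> {..<NN} {..<NN}" by (rule bij_lt) (use \<pi>inj \<pi>lt in auto)
  have "aes_alpha g (aes_M v) $ n = aes_alpha g v $ \<pi> n" if v: "v \<in> AES_V" and n: "n < NN" for v n
  proof -
    define k where "k = n div 4096"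
    have kt: "k < aes_order" using n unfolding k_def by (simp add: less_mult_imp_div_less mult.commute)
    have "aes_alpha g (aes_M v) $ n = eps' g ((aes_M ^^ (Suc k)) v ((n mod 4096) div 256)) (n mod 256)"
      using alpha_nth[OF n] unfolding k_def by (simp add: funpow_Suc_right del: funpow.simps)
    also have "\<dots> = aes_alpha g v $ \<pi> n"
    proof (cases "n + 4096 < NN")
      case True
      then have "\<pi> n = n + 4096" unfolding \<pi>_def by simp
      moreover have "(n + 4096) mod 256 = n mod 256" using mod_mult_self1[of n 16 256] by simp
      ultimately show ?thesis using alpha_nth[OF \<pi>lt[OF n]] unfolding k_def by simp
    next
      case False
      then have "Suc k = aes_order" using kt n recomp[of n] jb[of n] unfolding k_def by linarith
      have "n = 4096 * k + n mod 4096" unfolding k_def by simp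
      then have pn: "\<pi> n = n mod 4096" using False \<open>Suc k = aes_order\<close> unfolding \<pi>_def by simp
      have "(aes_M ^^ (Suc k)) v = v" using order_id[OF v] \<open>Suc k = aes_order\<close> by simp
      moreover have "n mod 4096 mod 256 = n mod 256" by (simp add: mod_mod_cancel)
      ultimately show ?thesis using alpha_nth[OF \<pi>lt[OF n]] pn by simp
    qed
    finally show ?thesis .
  qed
  then show ?thesis using \<pi>bij by blast
qed

lemma sum_ind: "b \<in> A \<Longrightarrow> finite A \<Longrightarrow> (\<Sum>j\<in>A. (if j = b then (1::bit) else 0) * f j) = f b"
proof -
  assume "b \<in> A" "finite A"
  have "(\<Sum>j\<in>A. (if j = b then (1::bit) else 0) * f j) = (\<Sum>j\<in>A. if j = b then f j else 0)"
    by (rule sum.cong) auto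
  also have "\<dots> = f b" using \<open>b \<in> A\<close> \<open>finite A\<close> by (simp add: sum.delta')
  finally show ?thesis .
qed

lemma perm_mat: assumes pb: "bij_betw \<pi> {..<N} {..<N}"
  shows "\<exists>A \<in> carrier_mat N N. invertible_mat (A :: bit mat) \<and>
     (\<forall>w. dim_vec w = N \<longrightarrow> A *\<^sub>v w = vec N (\<lambda>n. w $ \<pi> n))"
proof -
  define A :: "bit mat" where "A = mat N N (\<lambda>(i, j). if j = \<pi> i then 1 else 0)"
  define B :: "bit mat" where "B = mat N N (\<lambda>(i, j). if i = \<pi> j then 1 else 0)"
  have A: "A \<in> carrier_mat N N" and B: "B \<in> carrier_mat N N" unfolding A_def B_def by auto
  have pl: "\<pi> i < N" if "i < N" for i using pb that by (auto dest: bij_betwE)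
  have pinj: "inj_on \<pi> {..<N}" using pb by (simp add: bij_betw_def)
  have rowA: "row A i = vec N (\<lambda>j. if j = \<pi> i then 1 else 0)" if "i < N" for i
    unfolding A_def using that by simp
  have colB: "col B l = vec N (\<lambda>j. if j = \<pi> l then 1 else 0)" if "l < N" for l
    unfolding B_def using that by simp
  have mv: "A *\<^sub>v w = vec N (\<lambda>n. w $ \<pi> n)" if w: "dim_vec w = N" for w
  proof (rule eq_vecI)
    show "dim_vec (A *\<^sub>v w) = dim_vec (vec N (\<lambda>n. w $ \<pi> n))" unfolding A_def by simp
    fix i assume "i < dim_vec (vec N (\<lambda>n. w $ \<pi> n))"
    then have i: "i < N" by simp
    have "(A *\<^sub>v w) $ i = row A i \<bullet> w" using i A by simp
    also have "\<dots> = (\<Sum>j\<in>{0..<N}. (if j = \<pi> i then 1 else 0) * w $ j)"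
      unfolding rowA[OF i] scalar_prod_def w by (rule sum.cong) auto
    also have "\<dots> = w $ \<pi> i" using pl[OF i] by (intro sum_ind) auto
    finally show "(A *\<^sub>v w) $ i = vec N (\<lambda>n. w $ \<pi> n) $ i" using i by simp
  qed
  have AB: "A * B = 1\<^sub>m N"
  proof (rule eq_matI)
    fix i l assume i: "i < dim_row (1\<^sub>m N)" and l: "l < dim_col (1\<^sub>m N)"
    then have i: "i < N" and l: "l < N" by auto
    have "(A * B) $$ (i, l) = row A i \<bullet> col B l" using i l A B by simp
    also have "\<dots> = (\<Sum>j\<in>{0..<N}. (if j = \<pi> i then 1 else 0) * (if j = \<pi> l then 1 else 0))"
      unfolding rowA[OF i] colB[OF l] scalar_prod_def by (rule sum.cong) auto
    also have "\<dots> = (if \<pi> i = \<pi> l then 1 else 0)" using pl[OF i] by (intro sum_ind) auto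
    also have "\<dots> = (if i = l then 1 else 0)" using pinj i l by (auto simp: inj_on_def)
    finally show "(A * B) $$ (i, l) = 1\<^sub>m N $$ (i, l)" using i l by simp
  next
    show "dim_row (A * B) = dim_row (1\<^sub>m N)" using A by simp
    show "dim_col (A * B) = dim_col (1\<^sub>m N)" using B by simp
  qed
  have BA: "B * A = 1\<^sub>m N" by (rule mat_mult_left_right_inverse[OF A B AB])
  have "invertible_mat A" unfolding invertible_mat_def inverts_mat_def
    using A B AB BA by (intro conjI exI[of _ B]) auto
  then show ?thesis using A mv by blast
qed
definition Inv :: "bit poly \<Rightarrow> ((nat \<Rightarrow> bit poly) \<Rightarrow> (nat \<Rightarrow> bit poly)) \<Rightarrow> bool" where
  "Inv g \<sigma> \<longleftrightarrow> \<sigma> \<in> Bij AES_V \<and> (\<exists>\<pi>. bij_betw \<pi> {..<NN} {..<NN} \<and>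
     (\<forall>v\<in>AES_V. \<forall>n<NN. aes_alpha g (\<sigma> v) $ n = aes_alpha g v $ \<pi> n))"

lemma restrict_Bij: "bij_betw f AES_V AES_V \<Longrightarrow> restrict f AES_V \<in> Bij AES_V"
  unfolding Bij_def by (simp add: restrict_extensional)

lemma Inv_gen: "bij_betw f AES_V AES_V \<Longrightarrow>
  (\<exists>\<pi>. bij_betw \<pi> {..<NN} {..<NN} \<and> (\<forall>v\<in>AES_V. \<forall>n<NN. aes_alpha g (f v) $ n = aes_alpha g v $ \<pi> n))
  \<Longrightarrow> Inv g (restrict f AES_V)"
proof -
  assume b: "bij_betw f AES_V AES_V" and
   e: "\<exists>\<pi>. bij_betw \<pi> {..<NN} {..<NN} \<and> (\<forall>v\<in>AES_V. \<forall>n<NN. aes_alpha g (f v) $ n = aes_alpha g v $ \<pi> n)"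
  from e obtain \<pi> where "bij_betw \<pi> {..<NN} {..<NN}" "\<forall>v\<in>AES_V. \<forall>n<NN. aes_alpha g (f v) $ n = aes_alpha g v $ \<pi> n"
    by blast
  then show ?thesis unfolding Inv_def using restrict_Bij[OF b] by (intro conjI exI[of _ \<pi>]) simp_all
qed

lemma Inv_tilde: assumes prim: "gf_primitive g" and f: "f \<in> G_tilde" shows "Inv g (restrict f AES_V)"
proof -
  obtain a c where ac: "a \<in> GF" "a \<noteq> 0" "c \<in> GF" and fd: "f = aff a c"
    using f unfolding G_tilde_def aff_def by blast
  have bij: "bij_betw (aff a c) AES_V AES_V"
  proof (rule bij_lt[OF finite_V])
    show "inj_on (aff a c) AES_V"
    proof
      fix s t assume s: "s \<in> AES_V" and t: "t \<in> AES_V" and e: "aff a c s = aff a c t"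
      show "s = t"
      proof
        fix i show "s i = t i"
        proof (cases "i < 16")
          case True
          have "gf_mul a (s i) = gf_mul a (t i)" using fun_cong[OF e, of i] True unfolding aff_def by simp
          then show ?thesis using mul_inj[OF prim ac(1,2)] s t True unfolding AES_V_def inj_on_def by auto
        next
          case False then show ?thesis using s t unfolding AES_V_def by simp
        qed
      qed
    qed
    fix s assume "s \<in> AES_V" then show "aff a c s \<in> AES_V"
      using ac gf_mul_GF GF_add unfolding aff_def AES_V_def by auto
  qed
  have perm: "\<exists>\<pi>. bij_betw \<pi> {..<NN} {..<NN} \<and> (\<forall>v\<in>AES_V. \<forall>n<NN. aes_alpha g (aff a c v) $ n = aes_alpha g v $ \<pi> n)"
  proof (rule byte_perm[OF prim, where f="\<lambda>k j y. gf_mul a y + c"])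
    show "bij_betw (\<lambda>y. gf_mul a y + c) GF GF" for k j :: nat by (rule aff_bij[OF prim ac])
    show "(aes_M ^^ k) (aff a c v) j = gf_mul a ((aes_M ^^ k) v j) + c" if "j < 16" for v k j
      unfolding Mk_aff[OF ac(3)] using that by (simp add: aff_def)
  qed
  show ?thesis unfolding fd by (rule Inv_gen[OF bij perm])
qed

lemma Inv_bar: assumes prim: "gf_primitive g" and f: "f \<in> G_bar" shows "Inv g (restrict f AES_V)"
proof -
  obtain d where d: "d \<in> AES_V" and fd: "f = (\<lambda>s i. s i + d i)"
    using f unfolding G_bar_def by blast
  have bij: "bij_betw f AES_V AES_V"
  proof (rule bij_lt[OF finite_V])
    show "inj_on f AES_V" unfolding fd inj_on_def by (metis add_right_cancel ext)
    fix s assume "s \<in> AES_V" then show "f s \<in> AES_V"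
      using d GF_add unfolding fd AES_V_def by auto
  qed
  have dk: "(aes_M ^^ k) d j \<in> GF" if "j < 16" for k j using Mk_V[OF d, of k] that unfolding AES_V_def by auto
  have perm: "\<exists>\<pi>. bij_betw \<pi> {..<NN} {..<NN} \<and> (\<forall>v\<in>AES_V. \<forall>n<NN. aes_alpha g (f v) $ n = aes_alpha g v $ \<pi> n)"
  proof (rule byte_perm[OF prim, where f="\<lambda>k j y. y + (if j < 16 then (aes_M ^^ k) d j else 0)"])
    show "bij_betw (\<lambda>y. y + (if j < 16 then (aes_M ^^ k) d j else 0)) GF GF" for k j
      by (rule tr_bij) (use dk in \<open>auto simp: GF_def\<close>)
    show "(aes_M ^^ k) (f v) j = (\<lambda>y. y + (if j < 16 then (aes_M ^^ k) d j else 0)) ((aes_M ^^ k) v j)"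
      if "j < 16" for v k j
      using that unfolding fd by (simp add: Mk_add)
  qed
  show ?thesis by (rule Inv_gen[OF bij perm])
qed

lemma Inv_M: "Inv g (restrict aes_M AES_V)"
proof (rule Inv_gen)
  show "bij_betw aes_M AES_V AES_V" by (rule bij_lt[OF finite_V M_inj M_V])
  show "\<exists>\<pi>. bij_betw \<pi> {..<NN} {..<NN} \<and> (\<forall>v\<in>AES_V. \<forall>n<NN. aes_alpha g (aes_M v) $ n = aes_alpha g v $ \<pi> n)"
    by (rule M_perm)
qed

lemma Inv_one: "Inv g (\<lambda>x\<in>AES_V. x)"
  unfolding Inv_def using id_Bij by (auto intro!: exI[of _ id])

lemma Inv_inv: assumes "Inv g h" shows "Inv g (inv\<^bsub>BijGroup AES_V\<^esub> h)"
proof -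
  from assms have hB: "h \<in> Bij AES_V" and
    ex: "\<exists>\<pi>. bij_betw \<pi> {..<NN} {..<NN} \<and> (\<forall>v\<in>AES_V. \<forall>n<NN. aes_alpha g (h v) $ n = aes_alpha g v $ \<pi> n)"
    unfolding Inv_def by auto
  obtain \<pi> where pb: "bij_betw \<pi> {..<NN} {..<NN}" and pe: "\<forall>v\<in>AES_V. \<forall>n<NN. aes_alpha g (h v) $ n = aes_alpha g v $ \<pi> n"
    using ex by blast
  have hb: "bij_betw h AES_V AES_V" using hB unfolding Bij_def by auto
  have iv: "inv\<^bsub>BijGroup AES_V\<^esub> h = (\<lambda>x \<in> AES_V. inv_into AES_V h x)" by (rule inv_BijGroup[OF hB])
  show ?thesis unfolding Inv_def iv
  proof (intro conjI exI[of _ "inv_into {..<NN} \<pi>"] ballI allI impI)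
    show "(\<lambda>x \<in> AES_V. inv_into AES_V h x) \<in> Bij AES_V" by (rule restrict_inv_into_Bij[OF hB])
    show "bij_betw (inv_into {..<NN} \<pi>) {..<NN} {..<NN}" by (rule bij_betw_inv_into[OF pb])
    fix v n assume v: "v \<in> AES_V" and n: "n < NN"
    define w where "w = inv_into AES_V h v"
    have w: "w \<in> AES_V" unfolding w_def using Bij_inv_into_mem[OF hB v] .
    have hw: "h w = v" unfolding w_def using hb v by (simp add: bij_betw_def f_inv_into_f)
    define m where "m = inv_into {..<NN} \<pi> n"
    have "m \<in> {..<NN}" unfolding m_def by (rule inv_into_into) (use pb n in \<open>simp add: bij_betw_def\<close>)
    then have m: "m < NN" by simp
    have pm: "\<pi> m = n" unfolding m_def using pb n by (simp add: bij_betw_def f_inv_into_f)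
    have "aes_alpha g (h w) $ m = aes_alpha g w $ \<pi> m" using pe w m by blast
    then have e: "aes_alpha g w $ n = aes_alpha g v $ m" using hw pm by simp
    have r: "(\<lambda>x \<in> AES_V. inv_into AES_V h x) v = w" using v unfolding w_def by simp
    show "aes_alpha g ((\<lambda>x \<in> AES_V. inv_into AES_V h x) v) $ n = aes_alpha g v $ inv_into {..<NN} \<pi> n"
      unfolding r e m_def ..
  qed
qed

lemma Inv_mult: assumes "Inv g h1" "Inv g h2" shows "Inv g (h1 \<otimes>\<^bsub>BijGroup AES_V\<^esub> h2)"
proof -
  from assms obtain \<pi>1 \<pi>2 where h1: "h1 \<in> Bij AES_V" and h2: "h2 \<in> Bij AES_V"
    and p1: "bij_betw \<pi>1 {..<NN} {..<NN}" "\<forall>v\<in>AES_V. \<forall>n<NN. aes_alpha g (h1 v) $ n = aes_alpha g v $ \<pi>1 n"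
    and p2: "bij_betw \<pi>2 {..<NN} {..<NN}" "\<forall>v\<in>AES_V. \<forall>n<NN. aes_alpha g (h2 v) $ n = aes_alpha g v $ \<pi>2 n"
    unfolding Inv_def by blast
  have m: "h1 \<otimes>\<^bsub>BijGroup AES_V\<^esub> h2 = compose AES_V h1 h2" using h1 h2 by (simp add: BijGroup_def)
  show ?thesis unfolding Inv_def m
  proof (intro conjI exI[of _ "\<pi>2 \<circ> \<pi>1"] ballI allI impI)
    show "compose AES_V h1 h2 \<in> Bij AES_V" by (rule compose_Bij[OF h1 h2])
    show "bij_betw (\<pi>2 \<circ> \<pi>1) {..<NN} {..<NN}" by (rule bij_betw_trans[OF p1(1) p2(1)])
    fix v n assume v: "v \<in> AES_V" and n: "n < NN"
    have h2v: "h2 v \<in> AES_V" using Bij_imp_funcset[OF h2] v by auto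
    have pn: "\<pi>1 n < NN" using p1(1) n by (auto dest: bij_betwE)
    show "aes_alpha g (compose AES_V h1 h2 v) $ n = aes_alpha g v $ (\<pi>2 \<circ> \<pi>1) n"
      using p1(2) p2(2) v h2v n pn by (simp add: compose_def)
  qed
qed

lemma Inv_G: assumes prim: "gf_primitive g" and s: "\<sigma> \<in> aes_G" shows "Inv g \<sigma>"
proof -
  have H: "Inv g h" if "h \<in> (\<lambda>f. restrict f AES_V) ` (G_tilde \<union> G_bar \<union> {aes_M})" for h
    using that Inv_tilde[OF prim] Inv_bar[OF prim] Inv_M by auto
  from s show ?thesis unfolding aes_G_def
  proof (induction rule: generate.induct)
    case one
    have "\<one>\<^bsub>BijGroup AES_V\<^esub> = (\<lambda>x\<in>AES_V. x)" by (simp add: BijGroup_def)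
    then show ?case using Inv_one by metis
  next
    case (incl h) then show ?case using H by blast
  next
    case (inv h) then show ?case using H Inv_inv by blast
  next
    case (eng h1 h2) then show ?case using Inv_mult by blast
  qed
qed

theorem mainTheorem10:
  fixes \<gamma> :: "bit poly" and \<sigma> :: "(nat \<Rightarrow> bit poly) \<Rightarrow> (nat \<Rightarrow> bit poly)"
  assumes "gf_primitive \<gamma>" and "\<sigma> \<in> aes_G"
  shows "\<exists>A \<in> carrier_mat (4096 * aes_order) (4096 * aes_order).
           invertible_mat A \<and> (\<forall>v \<in> AES_V. aes_alpha \<gamma> (\<sigma> v) = mult_mat_vec A (aes_alpha \<gamma> v))"
proof -
  obtain \<pi> where pb: "bij_betw \<pi> {..<NN} {..<NN}"
    and pe: "\<forall>v\<in>AES_V. \<forall>n<NN. aes_alpha \<gamma> (\<sigma> v) $ n = aes_alpha \<gamma> v $ \<pi> n"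
    using Inv_G[OF assms] unfolding Inv_def by blast
  from perm_mat[OF pb] obtain A :: "bit mat" where A1: "A \<in> carrier_mat NN NN"
    and A2: "invertible_mat A \<and> (\<forall>w. dim_vec w = NN \<longrightarrow> A *\<^sub>v w = vec NN (\<lambda>n. w $ \<pi> n))"
    by (rule bexE)
  have A: "A \<in> carrier_mat NN NN" "invertible_mat A" using A1 A2 by auto
  have mv: "\<forall>w. dim_vec w = NN \<longrightarrow> A *\<^sub>v w = vec NN (\<lambda>n. w $ \<pi> n)" using A2 by auto
  show ?thesis
  proof (intro bexI[OF _ A(1)] conjI ballI)
    show "invertible_mat A" by (rule A(2))
    fix v assume v: "v \<in> AES_V"
    have "A *\<^sub>v aes_alpha \<gamma> v = vec NN (\<lambda>n. aes_alpha \<gamma> v $ \<pi> n)" using mv alpha_dim by blast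
    also have "\<dots> = aes_alpha \<gamma> (\<sigma> v)"
      by (rule eq_vecI) (use pe v alpha_dim in auto)
    finally show "aes_alpha \<gamma> (\<sigma> v) = A *\<^sub>v aes_alpha \<gamma> v" by simp
  qed
qed

end
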